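(* Let $\alpha>0$. For $\theta\in[0,\pi]$ let $\lambda=\lambda(\theta;\alpha)\ge0$ satisfy $\cosh\lambda=1+\alpha-\alpha\cos\theta$, and define $$R_2(\alpha)=\frac{\alpha}{2\pi}\int_0^\pi\left(\frac{1}{\sinh\lambda}-\frac{1}{\sqrt{\alpha}\,\theta}\right)d\theta .$$ Then $$R_2(\alpha)=\frac{\sqrt{\alpha}}{4\pi}\ln\left(\frac{16}{\pi^2(\alpha+1)}\right).$$ *)

theory Defs
  imports "HOL-Analysis.Analysis"
begin

text \<open>lambda(theta; alpha): the unique nonnegative solution of
  cosh lambda = 1 + alpha - alpha cos theta (arcosh is the nonnegative branch).\<close>
definition lam :: "real \<Rightarrow> real \<Rightarrow> real" where
  "lam \<alpha> \<theta> = arcosh (1 + \<alpha> - \<alpha> * cos \<theta>)"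

definition R2_integrand :: "real \<Rightarrow> real \<Rightarrow> real" where
  "R2_integrand \<alpha> \<theta> = 1 / sinh (lam \<alpha> \<theta>) - 1 / (sqrt \<alpha> * \<theta>)"

definition R2 :: "real \<Rightarrow> real" where
  "R2 \<alpha> = \<alpha> / (2 * pi) * integral {0..pi} (R2_integrand \<alpha>)"

end

theory Submission
  imports Defs
begin

definition sc :: "real \<Rightarrow> real" where
  "sc x = (if x = 0 then 1 else sin x / x)"

lemma isCont_sc: "isCont sc x"
proof cases
  assume "x = 0"
  have "((\<lambda>x. sin x / x::real) \<longlongrightarrow> 1) (at 0)"
    using DERIV_sin [of 0] by (auto simp add: has_field_derivative_def field_has_derivative_at)
  moreover have "(sc \<longlongrightarrow> 1) (at 0) = ((\<lambda>x. sin x / x::real) \<longlongrightarrow> 1) (at 0)"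
    by (rule LIM_equal) (simp add: sc_def)
  ultimately show ?thesis using \<open>x = 0\<close>
    by (simp add: isCont_def sc_def)
next
  assume "x \<noteq> 0" show ?thesis
    by (rule continuous_transform_within [where \<delta> = "abs x" and f = "\<lambda>x. sin x / x"])
       (auto simp add: dist_real_def \<open>x \<noteq> 0\<close> sc_def)
qed

lemma sc_pos: "0 \<le> x \<Longrightarrow> x < pi \<Longrightarrow> sc x > 0"
  by (auto simp: sc_def intro!: divide_pos_pos sin_gt_zero)

lemma sinh_lam:
  assumes a: "\<alpha> > 0" and t: "0 < \<theta>" "\<theta> \<le> pi"
  shows "sinh (lam \<alpha> \<theta>) = 2 * sqrt \<alpha> * sin (\<theta>/2) * sqrt (1 + \<alpha> * (sin (\<theta>/2))\<^sup>2)"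
proof -
  define s where "s = sin (\<theta>/2)"
  have s: "s > 0" unfolding s_def using t by (intro sin_gt_zero) auto
  have cos: "cos \<theta> = 1 - 2 * s\<^sup>2"
    using cos_double[of "\<theta>/2"] unfolding s_def by (simp add: cos_squared_eq)
  have eq: "1 + \<alpha> - \<alpha> * cos \<theta> = 1 + 2 * \<alpha> * s\<^sup>2" unfolding cos by (simp add: algebra_simps)
  have ge: "1 + 2 * \<alpha> * s\<^sup>2 \<ge> 1" using a by simp
  have "sinh (lam \<alpha> \<theta>) = sqrt ((1 + 2 * \<alpha> * s\<^sup>2)\<^sup>2 - 1)"
    unfolding lam_def eq using sinh_arcosh_real[OF ge] .
  also have "(1 + 2 * \<alpha> * s\<^sup>2)\<^sup>2 - 1 = (2 * sqrt \<alpha> * s * sqrt (1 + \<alpha> * s\<^sup>2))\<^sup>2"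
  proof -
    have "(2 * sqrt \<alpha> * s * sqrt (1 + \<alpha> * s\<^sup>2))\<^sup>2 = 4 * (sqrt \<alpha>)\<^sup>2 * s\<^sup>2 * (sqrt (1 + \<alpha> * s\<^sup>2))\<^sup>2"
      by (simp add: power_mult_distrib)
    also have "\<dots> = 4 * \<alpha> * s\<^sup>2 * (1 + \<alpha> * s\<^sup>2)" using a by simp
    finally show ?thesis by (simp add: power2_eq_square algebra_simps)
  qed
  also have "sqrt \<dots> = 2 * sqrt \<alpha> * s * sqrt (1 + \<alpha> * s\<^sup>2)"
    using a s by simp
  finally show ?thesis unfolding s_def .
qed

theorem mainTheorem5:
  fixes \<alpha> :: real
  assumes "\<alpha> > 0"
  shows "R2_integrand \<alpha> integrable_on {0..pi}
    \<and> R2 \<alpha> = sqrt \<alpha> / (4 * pi) * ln (16 / (pi\<^sup>2 * (\<alpha> + 1)))"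
proof -
  have a: "\<alpha> > 0" by fact
  define W where "W = (\<lambda>\<theta>. sqrt (1 + \<alpha> * (sin (\<theta>/2))\<^sup>2) + cos (\<theta>/2))"
  define K where "K = (\<lambda>\<theta>. (ln (sqrt (1+\<alpha>)) - ln (W \<theta>) + ln (sc (\<theta>/2) / 2)) / sqrt \<alpha>)"
  have Wpos: "W \<theta> > 0" if "0 \<le> \<theta>" "\<theta> \<le> pi" for \<theta>
  proof -
    have "cos (\<theta>/2) \<ge> 0" using that by (intro cos_ge_zero) auto
    moreover have "sqrt (1 + \<alpha> * (sin (\<theta>/2))\<^sup>2) \<ge> 1" using a by simp
    ultimately show ?thesis unfolding W_def by linarith
  qed
  have cont: "continuous_on {0..pi} K"
  proof -
    have c1: "continuous_on {0..pi} (\<lambda>\<theta>. sc (\<theta>/2))"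
      by (rule continuous_on_compose2[of UNIV sc]) (auto intro!: continuous_at_imp_continuous_on isCont_sc continuous_intros)
    have p: "sc (\<theta>/2) / 2 > 0" if "\<theta> \<in> {0..pi}" for \<theta>
    proof -
      have "\<theta> \<le> pi" using that by simp
      then have "\<theta> / 2 < pi" using pi_gt_zero by linarith
      then show ?thesis using sc_pos[of "\<theta>/2"] that by auto
    qed
    show ?thesis unfolding K_def W_def
      using Wpos p a unfolding W_def
      apply (auto intro!: continuous_intros c1)
      apply (metis less_irrefl)+
      done
  qed
  have deriv: "(K has_vector_derivative R2_integrand \<alpha> \<theta>) (at \<theta>)" if th: "\<theta> \<in> {0<..<pi}" for \<theta>
  proof -
    define s where "s = sin (\<theta>/2)"
    define c where "c = cos (\<theta>/2)"
    define w where "w = sqrt (1 + \<alpha> * s\<^sup>2)"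
    have s: "s > 0" unfolding s_def using th by (intro sin_gt_zero) auto
    have w: "w \<ge> 1" unfolding w_def using a by simp
    have c: "c > 0" unfolding c_def using th by (intro cos_gt_zero) auto
    have wsq: "w\<^sup>2 = 1 + \<alpha> * s\<^sup>2" unfolding w_def using a by simp
    have sc1: "s\<^sup>2 + c\<^sup>2 = 1" unfolding s_def c_def by simp
    define K2 where "K2 = (\<lambda>\<theta>. (ln (sqrt (1+\<alpha>)) - ln (sqrt (1 + \<alpha> * (sin (\<theta>/2))\<^sup>2) + cos (\<theta>/2))
       + ln (sin (\<theta>/2)) - ln \<theta>) / sqrt \<alpha>)"
    have eqK: "K x = K2 x" if "x \<in> {0<..<pi}" for x
    proof -
      have "sin (x/2) > 0" using that by (intro sin_gt_zero) auto
      moreover have "W x > 0" using Wpos that by auto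
      ultimately show ?thesis using that unfolding K_def K2_def W_def sc_def
        by (simp add: ln_div)
    qed
    have dh: "((\<lambda>x. x/2) has_real_derivative (1/2)) (at \<theta>)"
      using DERIV_cdivide[OF DERIV_ident, of 2 \<theta> UNIV] by simp
    have ds: "((\<lambda>x. sin (x/2)) has_real_derivative (c*(1/2))) (at \<theta>)"
      using DERIV_fun_sin[OF dh] unfolding c_def .
    have dc: "((\<lambda>x. cos (x/2)) has_real_derivative (- s*(1/2))) (at \<theta>)"
      using DERIV_fun_cos[OF dh] unfolding s_def .
    have dsq: "((\<lambda>x. (sin (x/2))\<^sup>2) has_real_derivative (2 * s * (c*(1/2)))) (at \<theta>)"
      using DERIV_fun_pow[OF ds, of 2] unfolding s_def by simp
    have din: "((\<lambda>x. 1 + \<alpha> * (sin (x/2))\<^sup>2) has_real_derivative (\<alpha>*(2 * s * (c*(1/2))))) (at \<theta>)"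
      using DERIV_add[OF DERIV_const[of 1] DERIV_cmult[OF dsq, of \<alpha>]] by simp
    have inpos: "1 + \<alpha> * s\<^sup>2 > 0" using a by (simp add: add_pos_nonneg)
    have dw: "((\<lambda>x. sqrt (1 + \<alpha> * (sin (x/2))\<^sup>2)) has_real_derivative (inverse w / 2 * (\<alpha>*(2 * s * (c*(1/2)))))) (at \<theta>)"
      using DERIV_chain2[of sqrt _ "\<lambda>x. 1 + \<alpha> * (sin (x/2))\<^sup>2" \<theta>, OF DERIV_real_sqrt[OF inpos[unfolded s_def]] din]
      unfolding w_def s_def .
    have dW: "((\<lambda>x. sqrt (1 + \<alpha> * (sin (x/2))\<^sup>2) + cos (x/2)) has_real_derivative (inverse w / 2 * (\<alpha>*(2 * s * (c*(1/2)))) + - s*(1/2))) (at \<theta>)"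
      by (rule DERIV_add[OF dw dc])
    have wc: "w + c > 0" using w c by simp
    have dlnW: "((\<lambda>x. ln (sqrt (1 + \<alpha> * (sin (x/2))\<^sup>2) + cos (x/2))) has_real_derivative (1/(w+c) * (inverse w / 2 * (\<alpha>*(2 * s * (c*(1/2)))) + - s*(1/2)))) (at \<theta>)"
      using DERIV_chain2[of ln _ "\<lambda>x. sqrt (1 + \<alpha> * (sin (x/2))\<^sup>2) + cos (x/2)" \<theta>, OF DERIV_ln_divide[OF wc[unfolded w_def s_def c_def]] dW]
      unfolding w_def c_def s_def .
    have dlns: "((\<lambda>x. ln (sin (x/2))) has_real_derivative (1/s * (c*(1/2)))) (at \<theta>)"
      using DERIV_chain2[of ln _ "\<lambda>x. sin (x/2)" \<theta>, OF DERIV_ln_divide[OF s[unfolded s_def]] ds]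
      unfolding s_def .
    have dlnt: "((\<lambda>x. ln x) has_real_derivative (1/\<theta>)) (at \<theta>)"
      using DERIV_ln_divide th by simp
    have dK2: "(K2 has_real_derivative (((0 - 1/(w+c) * (inverse w / 2 * (\<alpha>*(2 * s * (c*(1/2)))) + - s*(1/2)) + 1/s * (c*(1/2))) - 1/\<theta>) / sqrt \<alpha>)) (at \<theta>)"
      unfolding K2_def
      by (intro DERIV_cdivide DERIV_diff DERIV_add DERIV_const dlnW dlns dlnt)
    have val: "((0 - 1/(w+c) * (inverse w / 2 * (\<alpha>*(2 * s * (c*(1/2)))) + - s*(1/2)) + 1/s * (c*(1/2))) - 1/\<theta>) / sqrt \<alpha> = R2_integrand \<alpha> \<theta>"
    proof -
      have "(0 - 1/(w+c) * (inverse w / 2 * (\<alpha>*(2 * s * (c*(1/2)))) + - s*(1/2)) + 1/s * (c*(1/2)))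
          = 1 / (2 * s * w)"
      proof -
        have nz: "w + c \<noteq> 0" "w \<noteq> 0" "s \<noteq> 0" "c * (w * 2) + w * (w * 2) \<noteq> 0" using s w c by (auto simp: add_pos_pos) (smt (verit) mult_pos_pos)
        have e1: "w * w = 1 + \<alpha> * (s * s)" "c * c + s * s = 1" using wsq sc1 by (simp_all add: power2_eq_square)
        show ?thesis using nz apply (simp add: field_simps)
          using e1 by algebra
      qed
      moreover have "R2_integrand \<alpha> \<theta> = (1 / (2 * s * w) - 1/\<theta>) / sqrt \<alpha>"
        unfolding R2_integrand_def using sinh_lam[OF a, of \<theta>] th a
        by (simp add: s_def w_def field_simps)
      ultimately show ?thesis by simp
    qed
    show ?thesis
      unfolding has_real_derivative_iff_has_vector_derivative[symmetric] val[symmetric]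
      by (rule has_field_derivative_transform_within_open[OF dK2, of "{0<..<pi}"])
         (use th eqK in auto)
  qed
  have int: "(R2_integrand \<alpha> has_integral (K pi - K 0)) {0..pi}"
    by (rule fundamental_theorem_of_calculus_interior) (use cont deriv in auto)
  have Kpi: "K pi = - ln pi / sqrt \<alpha>"
    unfolding K_def W_def sc_def using a by (simp add: ln_div)
  have K0: "K 0 = (ln (1+\<alpha>) / 2 - 2 * ln 2) / sqrt \<alpha>"
    unfolding K_def W_def sc_def using a by (simp add: ln_div ln_sqrt)
  have "R2 \<alpha> = \<alpha> / (2*pi) * (K pi - K 0)"
    unfolding R2_def using int by (simp add: integral_unique)
  also have "\<dots> = \<alpha> / sqrt \<alpha> / (4*pi) * (4 * ln 2 - 2 * ln pi - ln (1+\<alpha>))"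
    unfolding Kpi K0 using a pi_gt_zero by (simp add: field_simps)
  also have "\<alpha> / sqrt \<alpha> = sqrt \<alpha>" using a by (simp add: real_div_sqrt)
  also have "4 * ln 2 - 2 * ln pi - ln (1+\<alpha>) = ln (16 / (pi\<^sup>2 * (\<alpha> + 1)))"
  proof -
    have "ln (16 / (pi\<^sup>2 * (\<alpha> + 1))) = ln 16 - (ln (pi\<^sup>2) + ln (\<alpha>+1))"
      using a by (simp add: ln_div ln_mult)
    moreover have "ln (16::real) = 4 * ln 2"
      using ln_realpow[of 2 4] by simp
    moreover have "ln (pi\<^sup>2) = 2 * ln pi" using ln_realpow[of pi 2] by simp
    ultimately show ?thesis by (simp add: add.commute)
  qed
  finally show ?thesis using int by blast
qed

end
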